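(* The function $h_1(t)=\dfrac{\log^2(1+t)}{\log(1+t^2)}$ is strictly decreasing on $(0,1)$ and strictly increasing on $(1,\infty)$. In particular, $\log^2(1+t)\le\log(1+t^2)$ for $0<t\le1$. *)

theory Defs
  imports Complex_Main
begin

definition h1 :: "real \<Rightarrow> real" where
  "h1 t = (ln (1 + t))\<^sup>2 / ln (1 + t\<^sup>2)"

end

theory Submission
  imports Defs
begin

definition psi :: "real \<Rightarrow> real" where
  "psi x = (1 + x) * ln (1 + x) / x"

lemma psi_deriv:
  assumes "x > 0"
  shows "(psi has_real_derivative (x - ln (1 + x)) / x\<^sup>2) (at x)"
proof -
  have "((\<lambda>x. (1 + x) * ln (1 + x) / x) has_real_derivative
          ((1 * ln (1 + x) + (1 + x) * (1 / (1 + x))) * x - (1 + x) * ln (1 + x) * 1) / (x * x)) (at x)"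
    using assms by (auto intro!: derivative_eq_intros)
  moreover have "((1 * ln (1 + x) + (1 + x) * (1 / (1 + x))) * x - (1 + x) * ln (1 + x) * 1) / (x * x)
      = (x - ln (1 + x)) / x\<^sup>2"
    using assms by (simp add: field_simps power2_eq_square)
  ultimately show ?thesis unfolding psi_def[abs_def] by simp
qed

lemma psi_less:
  assumes "0 < a" "a < b"
  shows "psi a < psi b"
proof (rule DERIV_pos_imp_increasing[OF assms(2)])
  fix x assume "a \<le> x" "x \<le> b"
  then have x: "x > 0" using assms by simp
  have "(x - ln (1 + x)) / x\<^sup>2 > 0"
    using ln_add_one_self_less_self[OF x] x by simp
  then show "\<exists>y. DERIV psi x :> y \<and> y > 0" using psi_deriv[OF x] by blast
qed

definition g :: "real \<Rightarrow> real" where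
  "g x = (1 + x\<^sup>2) * ln (1 + x\<^sup>2) - x * (1 + x) * ln (1 + x)"

lemma g_psi:
  assumes "x > 0"
  shows "g x = x\<^sup>2 * (psi (x\<^sup>2) - psi x)"
  using assms unfolding g_def psi_def by (simp add: field_simps power2_eq_square)

lemma g_neg: "0 < x \<Longrightarrow> x < 1 \<Longrightarrow> g x < 0"
proof -
  assume x: "0 < x" "x < 1"
  have "x\<^sup>2 < x" using x by (simp add: power2_eq_square)
  moreover have "x\<^sup>2 > 0" using x by simp
  ultimately have "psi (x\<^sup>2) < psi x" by (rule psi_less[rotated])
  then show ?thesis using g_psi[OF x(1)] x by (simp add: mult_pos_neg)
qed

lemma g_pos: "1 < x \<Longrightarrow> g x > 0"
proof -
  assume x: "1 < x"
  have "x < x\<^sup>2" using x by (simp add: power2_eq_square)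
  then have "psi x < psi (x\<^sup>2)" using x by (intro psi_less) auto
  then show ?thesis using g_psi[of x] x by simp
qed

lemma alg:
  fixes L M a b x :: real
  assumes "a > 0" "b > 0" "M \<noteq> 0"
  shows "((2 * L * (1 / a)) * M - L\<^sup>2 * ((2 * x) / b)) / (M * M)
     = 2 * L * (b * M - x * a * L) / (a * b * M\<^sup>2)"
  using assms by (simp add: field_simps power2_eq_square)

lemma h1_deriv:
  assumes x: "x > 0"
  shows "(h1 has_real_derivative
     2 * ln (1 + x) * g x / ((1 + x) * (1 + x\<^sup>2) * (ln (1 + x\<^sup>2))\<^sup>2)) (at x)"
proof -
  have M: "ln (1 + x\<^sup>2) > 0" using x by (intro ln_gt_zero) simp
  have "((\<lambda>t. (ln (1 + t))\<^sup>2 / ln (1 + t\<^sup>2)) has_real_derivative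
     ((2 * ln (1 + x) * (1 / (1 + x))) * ln (1 + x\<^sup>2) - (ln (1 + x))\<^sup>2 * ((2 * x) / (1 + x\<^sup>2)))
        / (ln (1 + x\<^sup>2) * ln (1 + x\<^sup>2))) (at x)"
    using x M
    by (auto intro!: derivative_eq_intros simp: power2_eq_square add_pos_pos)
  moreover have "((2 * ln (1 + x) * (1 / (1 + x))) * ln (1 + x\<^sup>2) - (ln (1 + x))\<^sup>2 * ((2 * x) / (1 + x\<^sup>2)))
        / (ln (1 + x\<^sup>2) * ln (1 + x\<^sup>2))
     = 2 * ln (1 + x) * g x / ((1 + x) * (1 + x\<^sup>2) * (ln (1 + x\<^sup>2))\<^sup>2)"
    unfolding g_def
    by (rule alg) (use x M in \<open>auto intro: add_pos_nonneg\<close>)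
  ultimately show ?thesis unfolding h1_def[abs_def] by simp
qed

lemma h1_deriv_sign:
  assumes x: "x > 0"
  shows "g x < 0 \<Longrightarrow> 2 * ln (1 + x) * g x / ((1 + x) * (1 + x\<^sup>2) * (ln (1 + x\<^sup>2))\<^sup>2) < 0"
    and "g x > 0 \<Longrightarrow> 2 * ln (1 + x) * g x / ((1 + x) * (1 + x\<^sup>2) * (ln (1 + x\<^sup>2))\<^sup>2) > 0"
proof -
  have "ln (1 + x) > 0" "ln (1 + x\<^sup>2) > 0" "1 + x > 0" "1 + x\<^sup>2 > 0" using x by (auto intro!: ln_gt_zero add_pos_nonneg)
  then have Q: "(1 + x) * (1 + x\<^sup>2) * (ln (1 + x\<^sup>2))\<^sup>2 > 0" "2 * ln (1 + x) > 0" by auto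
  show "g x < 0 \<Longrightarrow> 2 * ln (1 + x) * g x / ((1 + x) * (1 + x\<^sup>2) * (ln (1 + x\<^sup>2))\<^sup>2) < 0"
    using divide_neg_pos[OF mult_pos_neg[OF Q(2)] Q(1)] by simp
  show "g x > 0 \<Longrightarrow> 2 * ln (1 + x) * g x / ((1 + x) * (1 + x\<^sup>2) * (ln (1 + x\<^sup>2))\<^sup>2) > 0"
    using divide_pos_pos[OF mult_pos_pos[OF Q(2)] Q(1)] by simp
qed

lemma F_ineq:
  fixes t :: real
  assumes t: "0 \<le> t" "t \<le> 1"
  shows "(ln (1 + t))\<^sup>2 \<le> ln (1 + t\<^sup>2)"
proof -
  let ?F = "\<lambda>t. ln (1 + t\<^sup>2) - (ln (1 + t))\<^sup>2"
  have "?F 0 \<le> ?F t"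
  proof (rule DERIV_nonneg_imp_nondecreasing[of 0 t ?F])
    fix x assume x: "0 \<le> x" "x \<le> t"
    have p: "1 + x > 0" "1 + x\<^sup>2 > 0" using x by (auto intro: add_pos_nonneg)
    have d: "(?F has_real_derivative (2 * x / (1 + x\<^sup>2) - 2 * ln (1 + x) * (1 / (1 + x)))) (at x)"
      using p by (auto intro!: derivative_eq_intros simp: power2_eq_square)
    have L: "ln (1 + x) \<le> x" using ln_add_one_self_le_self x by simp
    have L0: "ln (1 + x) \<ge> 0" using x by simp
    have "(1 + x\<^sup>2) * ln (1 + x) \<le> (1 + x\<^sup>2) * x" using L p by (simp add: mult_left_mono)
    also have "\<dots> \<le> x * (1 + x)"
    proof -
      have "x * x \<le> x * 1" using x t by (intro mult_left_mono) auto
      then have "x * (x * x) \<le> x * x" using x by (intro mult_left_mono) auto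
      then show ?thesis by (simp add: power2_eq_square algebra_simps)
    qed
    finally have "2 * ln (1 + x) * (1 / (1 + x)) \<le> 2 * x / (1 + x\<^sup>2)"
      using p by (simp add: field_simps)
    then show "\<exists>y. DERIV ?F x :> y \<and> y \<ge> 0" using d by (intro exI[of _ "2 * x / (1 + x\<^sup>2) - 2 * ln (1 + x) * (1 / (1 + x))"]) simp
  qed (use t in simp)
  then show ?thesis by simp
qed

theorem lemma3p7:
  shows "strict_antimono_on {0<..<1} h1 \<and> strict_mono_on {1<..} h1 \<and>
         (\<forall>t::real. 0 < t \<and> t \<le> 1 \<longrightarrow> (ln (1 + t))\<^sup>2 \<le> ln (1 + t\<^sup>2))"
proof (intro conjI allI impI)
  show "strict_antimono_on {0<..<1} h1"
  proof (rule monotone_onI)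
    fix a b :: real assume ab: "a \<in> {0<..<1}" "b \<in> {0<..<1}" "a < b"
    show "h1 b < h1 a"
    proof (rule DERIV_neg_imp_decreasing[OF ab(3)])
      fix x assume "a \<le> x" "x \<le> b"
      then have x: "0 < x" "x < 1" using ab by auto
      have "g x < 0" using g_neg x by simp
      then have "2 * ln (1 + x) * g x / ((1 + x) * (1 + x\<^sup>2) * (ln (1 + x\<^sup>2))\<^sup>2) < 0"
        by (rule h1_deriv_sign(1)[OF x(1)])
      then show "\<exists>y. DERIV h1 x :> y \<and> y < 0" using h1_deriv[OF x(1)] by blast
    qed
  qed
  show "strict_mono_on {1<..} h1"
  proof (rule strict_mono_onI)
    fix a b :: real assume ab: "a \<in> {1<..}" "b \<in> {1<..}" "a < b"
    show "h1 a < h1 b"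
    proof (rule DERIV_pos_imp_increasing[OF ab(3)])
      fix x assume "a \<le> x" "x \<le> b"
      then have x: "0 < x" "1 < x" using ab by auto
      have "g x > 0" using g_pos x by simp
      then have "2 * ln (1 + x) * g x / ((1 + x) * (1 + x\<^sup>2) * (ln (1 + x\<^sup>2))\<^sup>2) > 0"
        by (rule h1_deriv_sign(2)[OF x(1)])
      then show "\<exists>y. DERIV h1 x :> y \<and> y > 0" using h1_deriv[OF x(1)] by blast
    qed
  qed
  fix t :: real assume "0 < t \<and> t \<le> 1"
  then show "(ln (1 + t))\<^sup>2 \<le> ln (1 + t\<^sup>2)" using F_ineq by simp
qed

end
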